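(* Let $q>1$ be an integer and $\xi$ a nonzero rational number. Then the real number $E_q(\xi)$ is either irrational or zero. If moreover $|\xi|<1$, then the real number $E_{q^{-1}}(\xi)$ is irrational.
   Context: For $Q\in\mathbb{C}$ not a root of unity, $n_Q=\frac{1-Q^n}{1-Q}$, $n_Q!=\prod_{k=1}^nk_Q$, and $E_Q(z)=\sum_{n\ge0}z^n/n_Q!$. For $q>1$, $E_q$ is entire and $E_{q^{-1}}$ converges for $|z|<q/(q-1)$. *)

theory Defs
  imports Complex_Main
begin

definition qint :: "'a::field \<Rightarrow> nat \<Rightarrow> 'a" where
  "qint Q n = (1 - Q ^ n) / (1 - Q)"

definition qfact :: "'a::field \<Rightarrow> nat \<Rightarrow> 'a" where
  "qfact Q n = (\<Prod>k=1..n. qint Q k)"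

definition qexp :: "'a::real_normed_field \<Rightarrow> 'a \<Rightarrow> 'a" where
  "qexp Q z = (\<Sum>n. z ^ n / qfact Q n)"

end

theory Submission
  imports Defs "HOL-Computational_Algebra.Polynomial"
begin


definition cc :: "real \<Rightarrow> nat \<Rightarrow> real" where
  "cc q N = 1 / (\<Prod>k<N. (q^Suc k - 1))"

definition FF :: "real \<Rightarrow> real \<Rightarrow> real" where
  "FF q x = (\<Sum>N. cc q N * x^N)"

lemma cc_0[simp]: "cc q 0 = 1" by (simp add: cc_def)

lemma cc_Suc: "cc q (Suc N) = cc q N / (q^(Suc N) - 1)"
  by (simp add: cc_def)

lemma prodq_pos: "q > 1 \<Longrightarrow> (\<Prod>k<N. (q^Suc k - 1)) > (0::real)"
proof (intro prod_pos)
  fix k assume "q > 1" then show "q^Suc k - 1 > (0::real)" using one_less_power[of q "Suc k"] by simp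
qed

lemma cc_pos: "q > 1 \<Longrightarrow> cc q N > 0"
  using prodq_pos[of q N] by (simp add: cc_def)

lemma qpos: "q > 1 \<Longrightarrow> q^Suc n - 1 > (0::real)"
  using one_less_power[of q "Suc n"] by simp

lemma FF_summable:
  assumes q: "q > 1" shows "summable (\<lambda>N. cc q N * x^N)"
proof -
  obtain N0 where N0: "2*\<bar>x\<bar> + 1 < q^N0" using real_arch_pow[OF q] by blast
  show ?thesis
  proof (rule summable_ratio_test[where c="1/2" and N=N0])
    fix n assume n: "n \<ge> N0"
    have "q^N0 \<le> q^Suc n" using n q by (intro power_increasing) auto
    hence big: "2*\<bar>x\<bar> \<le> q^Suc n - 1" using N0 by linarith
    have pos: "q^Suc n - 1 > 0" using qpos[OF q] .
    have "norm (cc q (Suc n) * x ^ Suc n) = cc q n * \<bar>x\<bar> * \<bar>x\<bar>^n / (q^Suc n - 1)"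
      using cc_pos[OF q, of n] pos by (simp add: cc_Suc abs_mult power_abs)
    also have "\<dots> \<le> cc q n * \<bar>x\<bar>^n * (1/2)"
    proof -
      have "cc q n * \<bar>x\<bar>^n \<ge> 0" using cc_pos[OF q, of n] by simp
      moreover have "\<bar>x\<bar> / (q^Suc n - 1) \<le> 1/2" using big pos by (simp add: divide_simps)
      ultimately have "cc q n * \<bar>x\<bar>^n * (\<bar>x\<bar> / (q^Suc n - 1)) \<le> cc q n * \<bar>x\<bar>^n * (1/2)"
        by (intro mult_left_mono)
      thus ?thesis by (simp add: field_simps)
    qed
    also have "\<dots> = 1/2 * norm (cc q n * x ^ n)"
      using cc_pos[OF q, of n] by (simp add: abs_mult power_abs)
    finally show "norm (cc q (Suc n) * x ^ Suc n) \<le> 1/2 * norm (cc q n * x ^ n)" .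
  qed simp
qed

lemma FF_funeq:
  assumes q: "q > 1" shows "FF q (q*x) = (1+x) * FF q x"
proof -
  define g where "g N = cc q N * (q*x)^N - cc q N * x^N" for N
  have sg: "summable g" unfolding g_def using FF_summable[OF q] by (intro summable_diff)
  have g0: "g 0 = 0" by (simp add: g_def)
  have gS: "g (Suc N) = x * (cc q N * x^N)" for N
  proof -
    have pos: "q^Suc N - 1 > 0" using qpos[OF q] .
    have "g (Suc N) = cc q (Suc N) * (q^Suc N - 1) * x^Suc N"
      by (simp add: g_def power_mult_distrib algebra_simps)
    also have "\<dots> = cc q N * x^Suc N" using pos by (simp add: cc_Suc)
    finally show ?thesis by simp
  qed
  have "suminf g = (\<Sum>N. g (N+1)) + (\<Sum>i<1. g i)" by (rule suminf_split_initial_segment[OF sg])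
  also have "\<dots> = (\<Sum>N. x * (cc q N * x^N))" using g0 gS by simp
  also have "\<dots> = x * FF q x" unfolding FF_def by (rule suminf_mult[OF FF_summable[OF q]])
  finally have 1: "suminf g = x * FF q x" .
  have "suminf g = FF q (q*x) - FF q x" unfolding g_def FF_def
    by (rule suminf_diff[OF FF_summable[OF q] FF_summable[OF q], symmetric])
  with 1 show ?thesis by (simp add: algebra_simps)
qed

lemma FF_funeq_pow:
  assumes q: "q > 1" shows "FF q (q^m*x) = (\<Prod>t<m. 1 + q^t*x) * FF q x"
proof (induction m)
  case (Suc m)
  have "FF q (q^Suc m*x) = FF q (q*(q^m*x))" by (simp add: algebra_simps)
  also have "\<dots> = (1 + q^m*x) * FF q (q^m*x)" by (rule FF_funeq[OF q])
  finally show ?case using Suc by (simp add: algebra_simps)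
qed simp



lemma geom_tail:
  fixes f :: "nat \<Rightarrow> real"
  assumes r: "\<And>k. \<bar>f (Suc k)\<bar> \<le> (1/3) * \<bar>f k\<bar>" and f0: "f 0 \<noteq> 0"
  shows "summable f" "suminf f \<noteq> 0" "\<bar>suminf f\<bar> \<le> 2 * \<bar>f 0\<bar>"
proof -
  have b: "\<bar>f k\<bar> \<le> (1/3)^k * \<bar>f 0\<bar>" for k
  proof (induction k)
    case (Suc k)
    have "\<bar>f (Suc k)\<bar> \<le> (1/3) * \<bar>f k\<bar>" by (rule r)
    also have "\<dots> \<le> (1/3) * ((1/3)^k * \<bar>f 0\<bar>)" using Suc by simp
    finally show ?case by simp
  qed simp
  have sg: "summable (\<lambda>k. (1/3::real)^k * \<bar>f 0\<bar>)"
    by (intro summable_mult2 summable_geometric) simp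
  have sn: "summable (\<lambda>k. norm (f k))"
    by (rule summable_comparison_test[OF _ sg]) (use b in auto)
  then show sf: "summable f" by (rule summable_norm_cancel)
  have sg1: "summable (\<lambda>k. (1/3::real)^(Suc k) * \<bar>f 0\<bar>)"
    by (intro summable_mult2 summable_geometric) simp
  have sn1: "summable (\<lambda>k. norm (f (Suc k)))"
    using sn by (subst summable_Suc_iff)
  have "norm (\<Sum>k. f (Suc k)) \<le> (\<Sum>k. norm (f (Suc k)))" by (rule summable_norm[OF sn1])
  also have "\<dots> \<le> (\<Sum>k. (1/3::real)^(Suc k) * \<bar>f 0\<bar>)"
    by (rule suminf_le[OF _ sn1 sg1]) (metis b real_norm_def)
  also have "\<dots> = (1/3) * \<bar>f 0\<bar> * (\<Sum>k. (1/3::real)^k)"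
    by (subst suminf_mult[symmetric]) (auto intro: summable_geometric simp: algebra_simps)
  also have "\<dots> = \<bar>f 0\<bar> / 2" by (subst suminf_geometric) auto
  finally have tl: "\<bar>\<Sum>k. f (Suc k)\<bar> \<le> \<bar>f 0\<bar> / 2" by simp
  have eq: "suminf f = f 0 + (\<Sum>k. f (Suc k))" using suminf_split_head[OF sf] by simp
  show "suminf f \<noteq> 0" using tl eq f0 by auto
  show "\<bar>suminf f\<bar> \<le> 2 * \<bar>f 0\<bar>" using tl eq by auto
qed

definition XX :: "int \<Rightarrow> nat \<Rightarrow> nat \<Rightarrow> int" where
  "XX q r N = (\<Prod>k<N. (q^(r+k+1) - 1))"

lemma XX_dvd: "XX q 0 N dvd XX q r N"
proof (induction N arbitrary: r)
  case 0 then show ?case by (simp add: XX_def)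
next
  case (Suc N)
  note IHo = Suc.IH
  show ?case
  proof (induction r)
    case 0 then show ?case by simp
  next
    case (Suc r)
    have e1: "XX q (Suc r) (Suc N) = XX q (Suc r) N * (q^(r+N+2) - 1)"
      by (simp add: XX_def)
    have e2: "XX q r (Suc N) = (q^(r+1) - 1) * XX q (Suc r) N"
      unfolding XX_def by (subst prod.lessThan_Suc_shift) simp
    have "XX q (Suc r) (Suc N) = XX q (Suc r) N * (q^(N+1) - 1) + q^(N+1) * XX q r (Suc N)"
      unfolding e1 e2 by (simp add: algebra_simps power_add)
    moreover have "XX q 0 (Suc N) dvd XX q (Suc r) N * (q^(N+1) - 1)"
    proof -
      have "XX q 0 (Suc N) = XX q 0 N * (q^(N+1) - 1)" by (simp add: XX_def)
      thus ?thesis using IHo[of "Suc r"] by (simp add: mult_dvd_mono)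
    qed
    moreover have "XX q 0 (Suc N) dvd q^(N+1) * XX q r (Suc N)" using Suc.IH by simp
    ultimately show ?case by simp
  qed
qed



definition PP :: "int \<Rightarrow> nat \<Rightarrow> int poly" where
  "PP q n = (\<Prod>j<n. [:-(q^(n+1+j)), 1:])"

lemma poly_PP: "poly (PP q n) z = (\<Prod>j<n. z - q^(n+1+j))"
  by (simp add: PP_def poly_prod)

lemma deg_PP: "degree (PP q n) \<le> n"
proof -
  have "degree (PP q n) \<le> sum (degree \<circ> (\<lambda>j. [:-(q^(n+1+j)), 1:])) {..<n}"
    unfolding PP_def by (rule degree_prod_sum_le) simp
  also have "\<dots> = n" by simp
  finally show ?thesis .
qed

lemma phr_eq: "(of_int (poly (PP q n) (q^N)) :: real) = (\<Prod>j<n. (of_int q)^N - (of_int q)^(n+1+j))"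
  by (simp add: poly_PP of_int_prod)

lemma PP_vanish: "n < N \<Longrightarrow> N \<le> 2*n \<Longrightarrow> poly (PP q n) (q^N) = 0"
proof -
  assume a: "n < N" "N \<le> 2*n"
  hence e: "n+1+(N-n-1) = N" by simp
  show ?thesis unfolding poly_PP
    by (rule prod_zero[OF finite_lessThan, OF bexI[of _ "N-n-1"]]) (use a e in simp_all)
qed

lemma phr_pos:
  fixes Q :: real assumes Q: "Q > 1" and N: "2*n < N"
  shows "(\<Prod>j<n. Q^N - Q^(n+1+j)) > 0"
proof (intro prod_pos)
  fix j assume "j \<in> {..<n}"
  hence "n+1+j < N" using N by auto
  hence "Q^(n+1+j) < Q^N" by (rule power_strict_increasing[OF _ Q])
  thus "Q^N - Q^(n+1+j) > 0" by simp
qed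

lemma factor_le:
  fixes Q :: real assumes Q: "Q \<ge> 2" and s: "s < N"
  shows "Q^(Suc N) - Q^s \<le> Q^2 * (Q^N - Q^s)"
proof -
  define u where "u = Q^s"
  define w where "w = Q^N"
  have u0: "u > 0" using Q by (simp add: u_def)
  have "Q^N \<ge> Q^(Suc s)" using Q s by (intro power_increasing) auto
  hence wu: "w \<ge> Q*u" by (simp add: u_def w_def)
  have "w*(Q^2-Q) \<ge> Q*u*(Q^2-Q)" using wu Q by (intro mult_right_mono) (auto simp: power2_eq_square)
  moreover have "Q*u*(Q^2-Q) - u*(Q^2-1) = u*((Q-1)*(Q*Q-Q-1))" by (simp add: algebra_simps power2_eq_square)
  moreover have "u*((Q-1)*(Q*Q-Q-1)) \<ge> 0" using u0 Q
  proof -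
    have "Q*Q \<ge> 2*Q" using Q by (intro mult_right_mono) auto
    hence "Q*Q-Q-1 \<ge> 0" using Q by linarith
    thus ?thesis using u0 Q by (intro mult_nonneg_nonneg) auto
  qed
  ultimately have "w*(Q^2-Q) \<ge> u*(Q^2-1)" by linarith
  thus ?thesis by (simp add: u_def w_def algebra_simps power2_eq_square)
qed

lemma phr_step:
  fixes Q :: real assumes Q: "Q \<ge> 2" and N: "2*n < N"
  shows "(\<Prod>j<n. Q^(Suc N) - Q^(n+1+j)) \<le> Q^(2*n) * (\<Prod>j<n. Q^N - Q^(n+1+j))"
proof -
  have "(\<Prod>j<n. Q^(Suc N) - Q^(n+1+j)) \<le> (\<Prod>j<n. Q^2 * (Q^N - Q^(n+1+j)))"
  proof (rule prod_mono)
    fix j assume "j \<in> {..<n}"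
    hence j: "n+1+j < N" using N by auto
    have "Q^(n+1+j) < Q^(Suc N)" using j Q by (intro power_strict_increasing) auto
    thus "0 \<le> Q^(Suc N) - Q^(n+1+j) \<and> Q^(Suc N) - Q^(n+1+j) \<le> Q^2 * (Q^N - Q^(n+1+j))"
      using factor_le[OF Q j] by simp
  qed
  also have "\<dots> = Q^(2*n) * (\<Prod>j<n. Q^N - Q^(n+1+j))"
    by (simp add: prod.distrib power_mult)
  finally show ?thesis .
qed

lemma sum_lt_odd: "(\<Sum>k<2*n+1. k) = (2*n+1)*(n::nat)"
  by (induction n) (auto simp: algebra_simps)

lemma first_le:
  fixes Q :: real assumes Q: "Q \<ge> 2"
  shows "cc Q (2*n+1) * (\<Prod>j<n. Q^(2*n+1) - Q^(n+1+j)) \<le> 1"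
proof -
  have P1: "(\<Prod>j<n. Q^(2*n+1) - Q^(n+1+j)) \<le> (\<Prod>j<n. Q^(2*n+1))"
  proof (rule prod_mono)
    fix j assume "j \<in> {..<n}"
    hence "n+1+j < 2*n+1" by auto
    hence "Q^(n+1+j) < Q^(2*n+1)" using Q by (intro power_strict_increasing) auto
    thus "0 \<le> Q^(2*n+1) - Q^(n+1+j) \<and> Q^(2*n+1) - Q^(n+1+j) \<le> Q^(2*n+1)" using Q by simp
  qed
  have P2: "(\<Prod>k<2*n+1. Q^k) \<le> (\<Prod>k<2*n+1. Q^Suc k - 1)"
  proof (rule prod_mono)
    fix k :: nat
    have "Q^k \<ge> 1" using Q by simp
    hence "Q^k * (Q - 1) \<ge> Q^k * 1" using Q by (intro mult_left_mono) auto
    moreover have "Q^k*(Q-1) = Q^Suc k - Q^k" by (simp add: algebra_simps)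
    ultimately have "Q^Suc k - 1 \<ge> Q^k" using \<open>Q^k \<ge> 1\<close> by linarith
    thus "0 \<le> Q^k \<and> Q^k \<le> Q^Suc k - 1" using Q by simp
  qed
  have "(\<Prod>k<2*n+1. Q^k) = Q^(\<Sum>k<2*n+1. k)" by (rule power_sum[symmetric])
  also have "\<dots> = Q^((2*n+1)*n)" by (simp only: sum_lt_odd)
  finally have "(\<Prod>k<2*n+1. Q^k) = Q^((2*n+1)*n)" .
  moreover have "(\<Prod>j<n. Q^(2*n+1)) = Q^((2*n+1)*n)" by (simp only: prod_constant card_lessThan power_mult)
  ultimately have le: "(\<Prod>j<n. Q^(2*n+1) - Q^(n+1+j)) \<le> (\<Prod>k<2*n+1. Q^Suc k - 1)"
    using P1 P2 by linarith
  have pos: "(\<Prod>k<2*n+1. Q^Suc k - 1) > 0" using prodq_pos[of Q "2*n+1"] Q by linarith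
  show ?thesis using le pos by (simp add: cc_def divide_simps)
qed



definition tt :: "int \<Rightarrow> nat \<Rightarrow> real \<Rightarrow> nat \<Rightarrow> real" where
  "tt q n x N = cc (of_int q) N * of_int (poly (PP q n) (q^N)) * x^N"

definition Ap :: "int \<Rightarrow> nat \<Rightarrow> real \<Rightarrow> real" where
  "Ap q n x = (\<Sum>i\<le>degree (PP q n). of_int (coeff (PP q n) i) * (\<Prod>t<i. 1 + (of_int q)^t * x))"

lemma tt_expand:
  "tt q n x N = (\<Sum>i\<le>degree (PP q n). of_int (coeff (PP q n) i) * (cc (of_int q) N * ((of_int q)^i * x)^N))"
proof -
  have "(of_int (poly (PP q n) (q^N)) :: real) = (\<Sum>i\<le>degree (PP q n). of_int (coeff (PP q n) i) * (of_int q)^(N*i))"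
    by (simp add: poly_altdef of_int_sum power_mult)
  thus ?thesis unfolding tt_def
    by (simp add: sum_distrib_left sum_distrib_right power_mult_distrib power_mult[symmetric] mult.commute mult.left_commute)
qed

lemma tt_sums:
  assumes q: "q > 1"
  shows "summable (tt q n x)" "suminf (tt q n x) = Ap q n x * FF (of_int q) x"
proof -
  have qr: "(of_int q :: real) > 1" using q by simp
  have s: "summable (\<lambda>N. of_int (coeff (PP q n) i) * (cc (of_int q) N * ((of_int q)^i * x)^N))" for i
    by (intro summable_mult FF_summable[OF qr])
  show "summable (tt q n x)" unfolding tt_expand[abs_def] by (intro summable_sum s)
  have "suminf (tt q n x) = (\<Sum>i\<le>degree (PP q n). \<Sum>N. of_int (coeff (PP q n) i) * (cc (of_int q) N * ((of_int q)^i * x)^N))"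
    unfolding tt_expand[abs_def] by (rule suminf_sum) (rule s)
  also have "\<dots> = (\<Sum>i\<le>degree (PP q n). of_int (coeff (PP q n) i) * FF (of_int q) ((of_int q)^i * x))"
    unfolding FF_def by (intro sum.cong refl) (rule suminf_mult[OF FF_summable[OF qr]])
  also have "\<dots> = Ap q n x * FF (of_int q) x"
    unfolding Ap_def FF_funeq_pow[OF qr] by (simp add: sum_distrib_right mult.assoc)
  finally show "suminf (tt q n x) = Ap q n x * FF (of_int q) x" .
qed

lemma Ap_int:
  assumes b: "b \<noteq> 0"
  shows "(of_int b)^n * Ap q n (of_int a / of_int b) \<in> \<int>"
proof -
  have "(of_int b)^n * Ap q n (of_int a / of_int b) =
     (\<Sum>i\<le>degree (PP q n). of_int (coeff (PP q n) i) * (of_int b)^(n-i) * ((of_int b)^i * (\<Prod>t<i. 1 + (of_int q)^t * (of_int a / of_int b))))"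
  proof -
    have "(of_int b :: real)^n * (of_int (coeff (PP q n) i) * (\<Prod>t<i. 1 + (of_int q)^t * (of_int a / of_int b)))
       = of_int (coeff (PP q n) i) * (of_int b)^(n-i) * ((of_int b)^i * (\<Prod>t<i. 1 + (of_int q)^t * (of_int a / of_int b)))"
      if "i \<in> {..degree (PP q n)}" for i
    proof -
      have "i \<le> n" using that deg_PP[of q n] by auto
      hence "(of_int b :: real)^n = (of_int b)^(n-i) * (of_int b)^i" by (simp add: power_add[symmetric])
      thus ?thesis by simp
    qed
    thus ?thesis unfolding Ap_def sum_distrib_left by (intro sum.cong refl) auto
  qed
  also have "\<dots> = (\<Sum>i\<le>degree (PP q n). of_int (coeff (PP q n) i) * (of_int b)^(n-i) * (\<Prod>t<i. of_int b + (of_int q)^t * of_int a))"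
  proof (intro sum.cong refl arg_cong2[where f="(*)"])
    fix i
    have "(of_int b :: real)^i * (\<Prod>t<i. 1 + (of_int q)^t * (of_int a / of_int b)) = (\<Prod>t<i. of_int b * (1 + (of_int q)^t * (of_int a / of_int b)))"
      by (simp add: prod.distrib)
    also have "\<dots> = (\<Prod>t<i. of_int b + (of_int q)^t * of_int a)"
      using b by (intro prod.cong refl) (simp add: field_simps)
    finally show "(of_int b :: real)^i * (\<Prod>t<i. 1 + (of_int q)^t * (of_int a / of_int b)) = (\<Prod>t<i. of_int b + (of_int q)^t * of_int a)" .
  qed
  also have "\<dots> \<in> \<int>" by (intro Ints_sum Ints_mult Ints_prod Ints_add Ints_power Ints_of_int)
  finally show ?thesis .
qed

lemma tt_int:
  assumes b: "b \<noteq> 0" and q: "q > 1" and N: "N \<le> n"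
  shows "(of_int b)^n * tt q n (of_int a / of_int b) N \<in> \<int>"
proof -
  define Y where "Y = XX q 0 N"
  have phi: "poly (PP q n) (q^N) = (- (q^N))^n * XX q (n-N) n"
  proof -
    have "poly (PP q n) (q^N) = (\<Prod>j<n. (- (q^N)) * (q^((n-N)+j+1) - 1))"
      unfolding poly_PP
    proof (intro prod.cong refl)
      fix j assume "j \<in> {..<n}"
      have "n+1+j = N + ((n-N)+j+1)" using N by simp
      hence "q^(n+1+j) = q^(N + ((n-N)+j+1))" by (simp only:)
      also have "\<dots> = q^N * q^((n-N)+j+1)" by (rule power_add)
      finally have e2: "q^(n+1+j) = q^N * q^((n-N)+j+1)" .
      show "q^N - q^(n+1+j) = (- (q^N)) * (q^((n-N)+j+1) - 1)" by (simp only: e2) (simp add: algebra_simps)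
    qed
    also have "\<dots> = (\<Prod>j<n. (- (q^N))) * (\<Prod>j<n. (q^((n-N)+j+1) - 1))" by (rule prod.distrib)
    finally show ?thesis by (simp only: prod_constant card_lessThan XX_def)
  qed
  have "Y dvd XX q 0 n" unfolding Y_def XX_def using N by (intro prod_dvd_prod_subset) auto
  also have "\<dots> dvd XX q (n-N) n" by (rule XX_dvd)
  finally have "Y dvd poly (PP q n) (q^N)" unfolding phi by simp
  then obtain d where d: "poly (PP q n) (q^N) = Y * d" by blast
  have Yr: "(of_int Y :: real) = (\<Prod>k<N. (of_int q)^Suc k - 1)" by (simp add: Y_def XX_def of_int_prod)
  have Ypos: "(of_int Y :: real) > 0" unfolding Yr by (rule prodq_pos) (use q in simp)
  have "(of_int b)^n * tt q n (of_int a / of_int b) N = of_int d * (of_int a)^N * (of_int b)^(n-N)"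
  proof -
    have "(of_int b :: real)^n = (of_int b)^(n-N) * (of_int b)^N" using N by (simp add: power_add[symmetric])
    moreover have "cc (of_int q) N * of_int (poly (PP q n) (q^N)) = (of_int d :: real)"
      unfolding cc_def d Yr[symmetric] using Ypos by simp
    ultimately show ?thesis unfolding tt_def using b by (simp add: power_divide field_simps)
  qed
  also have "\<dots> \<in> \<int>" by (intro Ints_mult Ints_power Ints_of_int)
  finally show ?thesis .
qed



lemma tt_ratio:
  assumes q: "q \<ge> 2" and N: "2*n < N"
  shows "\<bar>tt q n x (Suc N)\<bar> \<le> \<bar>x\<bar> * \<bar>tt q n x N\<bar>"
proof -
  define Q where "Q = (of_int q :: real)"
  have Q2: "Q \<ge> 2" using q by (simp add: Q_def)
  define p0 where "p0 = (\<Prod>j<n. Q^N - Q^(n+1+j))"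
  define p1 where "p1 = (\<Prod>j<n. Q^(Suc N) - Q^(n+1+j))"
  have p0pos: "p0 > 0" unfolding p0_def by (rule phr_pos) (use Q2 N in auto)
  have p1pos: "p1 > 0" unfolding p1_def by (rule phr_pos) (use Q2 N in auto)
  have p1le: "p1 \<le> Q^(2*n) * p0" unfolding p1_def p0_def by (rule phr_step[OF Q2 N])
  have "Q^(2*n) \<le> Q^N" using Q2 N by (intro power_increasing) auto
  moreover have "Q^N * (Q - 1) \<ge> Q^N * 1" using Q2 by (intro mult_left_mono) auto
  moreover have "Q^N \<ge> 1" using Q2 by simp
  moreover have "Q^(Suc N) = Q*Q^N" by simp
  moreover have "Q^N*(Q-1) = Q*Q^N - Q^N" by (simp add: algebra_simps)
  ultimately have QQ: "Q^(2*n) \<le> Q^(Suc N) - 1" by linarith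
  have den: "Q^(Suc N) - 1 > 0" using QQ Q2 by (smt (verit) zero_less_power)
  have "p1 \<le> (Q^(Suc N) - 1) * p0" using p1le QQ p0pos by (smt (verit) mult_right_mono)
  hence rat: "p1 / (Q^(Suc N) - 1) \<le> p0" using den by (simp add: divide_simps mult.commute)
  have ccp: "cc Q N > 0" using cc_pos Q2 by simp
  have e1: "\<bar>tt q n x (Suc N)\<bar> = (cc Q N * \<bar>x\<bar>^Suc N) * (p1 / (Q^(Suc N) - 1))"
    unfolding tt_def Q_def[symmetric] phr_eq p1_def[symmetric] using ccp p1pos den
    by (simp add: cc_Suc abs_mult power_abs)
  have e2: "\<bar>x\<bar> * \<bar>tt q n x N\<bar> = (cc Q N * \<bar>x\<bar>^Suc N) * p0"
    unfolding tt_def Q_def[symmetric] phr_eq p0_def[symmetric] using ccp p0pos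
    by (simp add: abs_mult power_abs)
  show ?thesis unfolding e1 e2 using ccp rat by (intro mult_left_mono) auto
qed

lemma tt_first:
  assumes q: "q \<ge> 2" and x: "x \<noteq> 0"
  shows "tt q n x (2*n+1) \<noteq> 0" "\<bar>tt q n x (2*n+1)\<bar> \<le> \<bar>x\<bar>^(2*n+1)"
proof -
  define Q where "Q = (of_int q :: real)"
  have Q2: "Q \<ge> 2" using q by (simp add: Q_def)
  define p0 where "p0 = (\<Prod>j<n. Q^(2*n+1) - Q^(n+1+j))"
  have p0pos: "p0 > 0" unfolding p0_def by (rule phr_pos) (use Q2 in auto)
  have ccp: "cc Q (2*n+1) > 0" using cc_pos Q2 by simp
  have e: "tt q n x (2*n+1) = cc Q (2*n+1) * p0 * x^(2*n+1)"
    unfolding tt_def Q_def[symmetric] phr_eq p0_def ..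
  show "tt q n x (2*n+1) \<noteq> 0" unfolding e using ccp p0pos x by simp
  have le: "cc Q (2*n+1) * p0 \<le> 1" unfolding p0_def by (rule first_le[OF Q2])
  have "\<bar>tt q n x (2*n+1)\<bar> = (cc Q (2*n+1) * p0) * \<bar>x\<bar>^(2*n+1)"
    unfolding e using ccp p0pos by (simp add: abs_mult power_abs)
  also have "\<dots> \<le> 1 * \<bar>x\<bar>^(2*n+1)" using le by (intro mult_right_mono) auto
  finally show "\<bar>tt q n x (2*n+1)\<bar> \<le> \<bar>x\<bar>^(2*n+1)" by simp
qed



lemma main_irr:
  assumes q: "q \<ge> 2" and a: "a \<noteq> 0" and b: "b > 0" and ab: "9*a^2 \<le> b"
  shows "FF (of_int q) (of_int a / of_int b) \<notin> \<rat>"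
proof
  assume "FF (of_int q) (of_int a / of_int b) \<in> \<rat>"
  then obtain u v where v: "v > 0" and uv: "FF (of_int q) (of_int a / of_int b) = of_int u / of_int v"
    by (rule Rats_cases')
  define x where "x = of_int a / (of_int b :: real)"
  have br: "(of_int b :: real) > 0" using b by simp
  have x0: "x \<noteq> 0" using a b by (simp add: x_def)
  have "(of_int (9*a^2) :: real) \<le> of_int b" using ab by (simp only: of_int_le_iff)
  hence "9 * (of_int a :: real)^2 \<le> of_int b" by simp
  hence a2: "(of_int a :: real)^2 \<le> of_int b / 9" by simp
  have bx: "of_int b * x^2 \<le> 1/9"
  proof -
    have "of_int b * x^2 = (of_int a)^2 / of_int b" using br by (simp add: x_def power2_eq_square)
    also have "\<dots> \<le> (of_int b / 9) / of_int b" using a2 br by (intro divide_right_mono) auto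
    also have "\<dots> = 1/9" using br by simp
    finally show ?thesis .
  qed
  have xle: "\<bar>x\<bar> \<le> 1/3"
  proof -
    have a1: "1 \<le> \<bar>a\<bar>" using a by simp
    hence "\<bar>a\<bar> * 1 \<le> \<bar>a\<bar> * \<bar>a\<bar>" by (intro mult_left_mono) auto
    hence "\<bar>a\<bar> \<le> a^2" by (simp add: power2_eq_square abs_mult_self_eq)
    hence "(of_int \<bar>a\<bar> :: real) \<le> of_int (a^2)" by (simp only: of_int_le_iff)
    hence "(\<bar>of_int a\<bar> :: real) \<le> (of_int a)^2" by simp
    moreover have "\<bar>x\<bar> = \<bar>of_int a\<bar> / of_int b" using br by (simp add: x_def)
    ultimately have "\<bar>x\<bar> \<le> (of_int a)^2 / of_int b" using br by (metis divide_right_mono less_le)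
    also have "\<dots> \<le> (of_int b / 9) / of_int b" using a2 br by (intro divide_right_mono) auto
    also have "\<dots> = 1/9" using br by simp
    finally show ?thesis by simp
  qed
  obtain n where n: "2 * of_int v < (9::real)^n" using real_arch_pow[of 9] by auto
  define M where "M = 2*n+1"
  define f where "f k = tt q n x (k + M)" for k
  have fr: "\<bar>f (Suc k)\<bar> \<le> (1/3) * \<bar>f k\<bar>" for k
  proof -
    have "\<bar>f (Suc k)\<bar> = \<bar>tt q n x (Suc (k+M))\<bar>" by (simp add: f_def)
    also have "\<dots> \<le> \<bar>x\<bar> * \<bar>f k\<bar>" unfolding f_def by (rule tt_ratio[OF q]) (simp add: M_def)
    also have "\<dots> \<le> (1/3) * \<bar>f k\<bar>" using xle by (intro mult_right_mono) auto
    finally show ?thesis .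
  qed
  have f0: "f 0 \<noteq> 0" unfolding f_def M_def using tt_first[OF q x0] by simp
  have f0le: "\<bar>f 0\<bar> \<le> \<bar>x\<bar>^(2*n+1)" unfolding f_def M_def using tt_first[OF q x0] by simp
  note G = geom_tail[of f, OF fr f0]
  have q1: "q > 1" using q by simp
  have split: "suminf (tt q n x) = suminf f + (\<Sum>i<M. tt q n x i)"
    unfolding f_def by (rule suminf_split_initial_segment[OF tt_sums(1)[OF q1]])
  have low: "(\<Sum>i<M. tt q n x i) = (\<Sum>i\<le>n. tt q n x i)"
  proof (rule sum.mono_neutral_right)
    show "finite {..<M}" by simp
    show "{..n} \<subseteq> {..<M}" by (auto simp: M_def)
    show "\<forall>i\<in>{..<M} - {..n}. tt q n x i = 0"
    proof
      fix i assume "i \<in> {..<M} - {..n}"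
      hence "n < i" "i \<le> 2*n" by (auto simp: M_def)
      thus "tt q n x i = 0" by (simp add: tt_def PP_vanish)
    qed
  qed
  have Req: "suminf f = Ap q n x * FF (of_int q) x - (\<Sum>i\<le>n. tt q n x i)"
    using split low tt_sums(2)[OF q1] by simp
  define Z where "Z = of_int v * (of_int b)^n * suminf f"
  have "Z = of_int u * ((of_int b)^n * Ap q n x) - of_int v * (\<Sum>i\<le>n. (of_int b)^n * tt q n x i)"
  proof -
    have vF: "of_int v * FF (of_int q) x = of_int u" using uv v by (simp add: x_def)
    have "Z = (of_int b)^n * Ap q n x * (of_int v * FF (of_int q) x) - of_int v * ((of_int b)^n * (\<Sum>i\<le>n. tt q n x i))"
      unfolding Z_def Req by (simp only: algebra_simps)
    thus ?thesis unfolding vF by (simp add: sum_distrib_left mult.commute mult.left_commute)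
  qed
  also have "\<dots> \<in> \<int>"
  proof -
    have i1: "(of_int b)^n * Ap q n x \<in> \<int>" unfolding x_def by (rule Ap_int) (use b in simp)
    have i2: "(\<Sum>i\<le>n. (of_int b)^n * tt q n x i) \<in> \<int>"
    proof (rule Ints_sum)
      fix i assume "i \<in> {..n}"
      thus "(of_int b)^n * tt q n x i \<in> \<int>" unfolding x_def by (intro tt_int) (use b q1 in auto)
    qed
    show ?thesis by (rule Ints_diff[OF Ints_mult[OF Ints_of_int i1] Ints_mult[OF Ints_of_int i2]])
  qed
  finally have Zint: "Z \<in> \<int>" .
  have Z0: "Z \<noteq> 0" unfolding Z_def using G(2) v b by simp
  have "\<bar>Z\<bar> = of_int v * (of_int b)^n * \<bar>suminf f\<bar>" unfolding Z_def using v b by (simp add: abs_mult)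
  also have "\<dots> \<le> of_int v * (of_int b)^n * (2 * \<bar>x\<bar>^(2*n+1))"
    using G(3) f0le v b by (intro mult_left_mono) auto
  also have "\<dots> = 2 * of_int v * (of_int b * x^2)^n * \<bar>x\<bar>"
  proof -
    have h1: "\<bar>x\<bar>^(2*n+1) = (x^2)^n * \<bar>x\<bar>" by (simp only: power_add power_mult power2_abs power_one_right)
    have h2: "(of_int b * x^2)^n = (of_int b)^n * (x^2)^n" by (rule power_mult_distrib)
    show ?thesis unfolding h1 h2 by (simp only: mult_ac)
  qed
  also have "\<dots> \<le> 2 * of_int v * (1/9)^n * 1"
  proof -
    have p: "(of_int b * x^2)^n \<le> (1/9)^n" using bx br by (intro power_mono) auto
    have v0: "0 \<le> 2 * (of_int v :: real)" using v by simp
    have "2 * of_int v * (of_int b * x^2)^n \<le> 2 * of_int v * (1/9)^n" by (rule mult_left_mono[OF p v0])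
    moreover have "\<bar>x\<bar> \<le> 1" using xle by simp
    moreover have "0 \<le> 2 * of_int v * (1/9::real)^n" using v0 by simp
    ultimately show ?thesis by (rule mult_mono) auto
  qed
  also have "\<dots> < 1"
  proof -
    have e: "2 * of_int v * (1/9::real)^n * 1 = 2 * of_int v / 9^n" by (simp add: power_one_over)
    have "(9::real)^n > 0" by simp
    thus ?thesis unfolding e using n by (simp only: divide_less_eq) simp
  qed
  finally have "\<bar>Z\<bar> < 1" .
  with Ints_nonzero_abs_ge1[OF Zint Z0] show False by simp
qed



lemma FF_rat_zero:
  assumes q: "q \<ge> 2" and xr: "x \<in> \<rat>" and x0: "x \<noteq> 0" and Fr: "FF (of_int q) x \<in> \<rat>"
  shows "FF (of_int q) x = 0"
proof (rule ccontr)
  assume F0: "FF (of_int q) x \<noteq> 0"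
  obtain a b where b: "b > 0" and xab: "x = of_int a / of_int b" using xr by (rule Rats_cases')
  have a: "a \<noteq> 0" using x0 xab by auto
  define m where "m = nat (9*a^2)"
  define B where "B = b * q^m"
  have "int m < 2^m" by (metis less_exp of_nat_less_iff of_nat_numeral of_nat_power)
  also have "(2::int)^m \<le> q^m" using q by (intro power_mono) auto
  also have "q^m \<le> B" unfolding B_def using b q by simp
  finally have ab: "9*a^2 \<le> B" unfolding m_def by simp
  have Bpos: "B > 0" unfolding B_def using b q by simp
  define y where "y = (of_int a / of_int B :: real)"
  have qr: "(of_int q :: real) > 1" using q by simp
  have xy: "x = (of_int q)^m * y" unfolding y_def xab B_def using q by (simp add: field_simps)
  define P where "P = (\<Prod>t<m. 1 + (of_int q :: real)^t * y)"
  have FP: "FF (of_int q) x = P * FF (of_int q) y" unfolding xy P_def by (rule FF_funeq_pow[OF qr])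
  have P0: "P \<noteq> 0" using F0 FP by auto
  have Pr: "P \<in> \<rat>" unfolding P_def y_def by (intro Rats_prod) simp
  have "FF (of_int q) y = FF (of_int q) x / P" using FP P0 by simp
  also have "\<dots> \<in> \<rat>" using Fr Pr by simp
  finally have "FF (of_int q) y \<in> \<rat>" .
  with main_irr[OF q a Bpos ab] show False unfolding y_def by simp
qed



definition dd :: "real \<Rightarrow> nat \<Rightarrow> real" where
  "dd p N = 1 / (\<Prod>k<N. (1 - p^Suc k))"

definition GG :: "real \<Rightarrow> real \<Rightarrow> real" where
  "GG p y = (\<Sum>N. dd p N * y^N)"

lemma dd_Suc: "dd p (Suc N) = dd p N / (1 - p^Suc N)"
  by (simp add: dd_def)

lemma dprod_pos: "0 < p \<Longrightarrow> p < 1 \<Longrightarrow> (\<Prod>k<N. (1 - p^Suc k)) > (0::real)"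
proof (intro prod_pos)
  fix k assume "0 < p" "p < 1"
  then have "p^Suc k < 1" by (rule power_Suc_less_one)
  then show "1 - p^Suc k > (0::real)" by simp
qed

lemma dd_pos: "0 < p \<Longrightarrow> p < 1 \<Longrightarrow> dd p N > 0"
  using dprod_pos[of p N] by (simp add: dd_def)

lemma GG_summable:
  assumes p: "0 < p" "p < 1" and y: "\<bar>y\<bar> < 1"
  shows "summable (\<lambda>N. dd p N * y^N)"
proof -
  define c where "c = (1 + \<bar>y\<bar>) / 2"
  have c1: "c < 1" using y by (simp add: c_def)
  have "1 + \<bar>y\<bar> > 0" by (rule add_pos_nonneg) simp_all
  hence cpos: "c > 0" unfolding c_def by simp
  have yc: "\<bar>y\<bar> < c" unfolding c_def using y by (simp add: field_simps)
  have "\<bar>y\<bar>/c < 1" by (subst divide_less_eq_1_pos[OF cpos]) (rule yc)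
  hence "0 < 1 - \<bar>y\<bar>/c" by simp
  then obtain N0 where N0: "p^N0 < 1 - \<bar>y\<bar>/c" using real_arch_pow_inv[OF _ p(2)] by blast
  show ?thesis
  proof (rule summable_ratio_test[where c=c and N=N0, OF c1])
    fix n assume n: "n \<ge> N0"
    have "p^Suc n \<le> p^N0" using n p by (intro power_decreasing) auto
    hence big: "\<bar>y\<bar>/c \<le> 1 - p^Suc n" using N0 by linarith
    have pos: "1 - p^Suc n > 0" using p using power_Suc_less_one[OF p] by simp
    have yle: "\<bar>y\<bar> / (1 - p^Suc n) \<le> c" using big pos cpos by (simp add: divide_simps mult.commute)
    have "norm (dd p (Suc n) * y ^ Suc n) = (dd p n * \<bar>y\<bar>^n) * (\<bar>y\<bar> / (1 - p^Suc n))"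
      using dd_pos[OF p, of n] pos by (simp add: dd_Suc abs_mult power_abs)
    also have "\<dots> \<le> (dd p n * \<bar>y\<bar>^n) * c"
      using dd_pos[OF p, of n] yle by (intro mult_left_mono) auto
    also have "\<dots> = c * norm (dd p n * y ^ n)"
      using dd_pos[OF p, of n] by (simp add: abs_mult power_abs)
    finally show "norm (dd p (Suc n) * y ^ Suc n) \<le> c * norm (dd p n * y ^ n)" .
  qed
qed

lemma GG_funeq:
  assumes p: "0 < p" "p < 1" and y: "\<bar>y\<bar> < 1"
  shows "GG p (p*y) = (1 - y) * GG p y"
proof -
  have py: "\<bar>p*y\<bar> < 1"
  proof -
    have "\<bar>p*y\<bar> = p * \<bar>y\<bar>" using p by (simp add: abs_mult)
    also have "\<dots> \<le> 1 * \<bar>y\<bar>" using p by (intro mult_right_mono) auto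
    finally show ?thesis using y by simp
  qed
  define g where "g N = dd p N * y^N - dd p N * (p*y)^N" for N
  have sg: "summable g" unfolding g_def using GG_summable[OF p y] GG_summable[OF p py] by (intro summable_diff)
  have g0: "g 0 = 0" by (simp add: g_def)
  have gS: "g (Suc N) = y * (dd p N * y^N)" for N
  proof -
    have pos: "1 - p^Suc N > 0" using p using power_Suc_less_one[OF p] by simp
    have "g (Suc N) = dd p (Suc N) * (1 - p^Suc N) * y^Suc N"
      by (simp add: g_def power_mult_distrib algebra_simps)
    also have "\<dots> = dd p N * y^Suc N" using pos by (simp add: dd_Suc)
    finally show ?thesis by simp
  qed
  have "suminf g = (\<Sum>N. g (N+1)) + (\<Sum>i<1. g i)" by (rule suminf_split_initial_segment[OF sg])
  also have "\<dots> = (\<Sum>N. y * (dd p N * y^N))" using g0 gS by simp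
  also have "\<dots> = y * GG p y" unfolding GG_def by (rule suminf_mult[OF GG_summable[OF p y]])
  finally have 1: "suminf g = y * GG p y" .
  have "suminf g = GG p y - GG p (p*y)" unfolding g_def GG_def
    by (rule suminf_diff[OF GG_summable[OF p y] GG_summable[OF p py], symmetric])
  with 1 show ?thesis by (simp add: algebra_simps)
qed

lemma KK_one:
  assumes q: "q > 1" and y: "\<bar>y\<bar> < 1" and y0: "y \<noteq> 0"
  shows "GG (1/q) y * (1 - y) * FF q (-y) = 1"
proof -
  define p where "p = 1/q"
  have p: "0 < p" "p < 1" using q by (auto simp: p_def)
  define K where "K z = GG p z * (1 - z) * FF q (-z)" for z
  have step: "K (p*z) = K z" if z: "\<bar>z\<bar> < 1" for z
  proof -
    have "FF q (-z) = FF q (q * (-(p*z)))" using q by (simp add: p_def)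
    also have "\<dots> = (1 - p*z) * FF q (-(p*z))" using FF_funeq[OF q, of "-(p*z)"] by simp
    finally have e: "FF q (-z) = (1 - p*z) * FF q (-(p*z))" .
    show ?thesis unfolding K_def GG_funeq[OF p z] e by (simp add: algebra_simps)
  qed
  have pm: "\<bar>p^m * y\<bar> < 1" for m
  proof -
    have "\<bar>p^m * y\<bar> = p^m * \<bar>y\<bar>" using p by (simp add: abs_mult)
    also have "\<dots> \<le> 1 * \<bar>y\<bar>" using p by (intro mult_right_mono power_le_one) auto
    finally show ?thesis using y by simp
  qed
  have iter: "K (p^m * y) = K y" for m
  proof (induction m)
    case (Suc m)
    have "K (p^Suc m * y) = K (p * (p^m * y))" by (simp add: algebra_simps)
    also have "\<dots> = K (p^m * y)" by (rule step[OF pm])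
    finally show ?case using Suc by simp
  qed simp
  have lim0: "(\<lambda>m. p^m * y) \<longlonglongrightarrow> 0"
    using LIMSEQ_power_zero[of p] p by (auto intro: tendsto_mult_left_zero)
  have cG: "isCont (GG p) 0"
    unfolding GG_def[abs_def] by (rule isCont_powser[OF GG_summable[OF p y]]) (use y0 in simp)
  have cF: "isCont (FF q) (-0)"
    unfolding FF_def[abs_def] by (rule isCont_powser_converges_everywhere) (rule FF_summable[OF q])
  have cm: "isCont (uminus :: real \<Rightarrow> real) 0" by (intro continuous_intros)
  have cF': "isCont (\<lambda>z. FF q (- z)) 0" using isCont_o2[OF cm cF] by simp
  have cK: "isCont K 0" unfolding K_def
    by (intro isCont_mult cG cF' continuous_intros)
  have "(\<lambda>m. K (p^m * y)) \<longlonglongrightarrow> K 0" by (rule isCont_tendsto_compose[OF cK lim0])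
  hence "(\<lambda>m. K y) \<longlonglongrightarrow> K 0" unfolding iter .
  hence "K y = K 0" by (simp add: LIMSEQ_const_iff)
  also have "K 0 = 1"
  proof -
    have "GG p 0 = 1" unfolding GG_def powser_zero by (simp add: dd_def)
    moreover have "FF q 0 = 1" unfolding FF_def powser_zero by simp
    ultimately show ?thesis by (simp add: K_def)
  qed
  finally show ?thesis unfolding K_def p_def .
qed



lemma qfact_alt: "qfact Q n = (\<Prod>k<n. (1 - Q^Suc k)) / (1 - Q)^n"
proof -
  have "qfact Q n = (\<Prod>k<n. qint Q (Suc k))"
    unfolding qfact_def using prod.atLeast1_atMost_eq[of "qint Q" n] by simp
  also have "\<dots> = (\<Prod>k<n. (1 - Q^Suc k)) / (1 - Q)^n"
    unfolding qint_def prod_dividef prod_constant card_lessThan ..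
  finally show ?thesis .
qed

lemma qfact_alt2: "qfact Q n = (\<Prod>k<n. (Q^Suc k - 1)) / (Q - 1)^n"
proof -
  have "qfact Q n = (\<Prod>k<n. qint Q (Suc k))"
    unfolding qfact_def using prod.atLeast1_atMost_eq[of "qint Q" n] by simp
  also have "\<dots> = (\<Prod>k<n. (Q^Suc k - 1) / (Q - 1))"
    unfolding qint_def by (intro prod.cong refl) (metis minus_diff_eq minus_divide_divide)
  also have "\<dots> = (\<Prod>k<n. (Q^Suc k - 1)) / (Q - 1)^n"
    unfolding prod_dividef prod_constant card_lessThan ..
  finally show ?thesis .
qed

lemma term_FF: "z^n / qfact (Q::real) n = cc Q n * ((Q - 1) * z)^n"
proof -
  have "z^n / qfact Q n = z^n * (Q - 1)^n / (\<Prod>k<n. (Q^Suc k - 1))"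
    unfolding qfact_alt2 by (rule divide_divide_eq_right)
  also have "\<dots> = cc Q n * ((Q - 1) * z)^n"
    unfolding cc_def power_mult_distrib by simp
  finally show ?thesis .
qed

lemma term_GG: "z^n / qfact (inverse (Q::real)) n = dd (1/Q) n * ((1 - 1/Q) * z)^n"
proof -
  have "z^n / qfact (inverse Q) n = z^n * (1 - inverse Q)^n / (\<Prod>k<n. (1 - (inverse Q)^Suc k))"
    unfolding qfact_alt by (rule divide_divide_eq_right)
  also have "\<dots> = dd (inverse Q) n * ((1 - inverse Q) * z)^n"
    unfolding dd_def power_mult_distrib by simp
  finally show ?thesis by (simp add: inverse_eq_divide)
qed

lemma qexp_FF: "qexp (Q::real) z = FF Q ((Q - 1) * z)"
  unfolding qexp_def FF_def term_FF ..

lemma qexp_GG: "qexp (inverse (Q::real)) z = GG (1/Q) ((1 - 1/Q) * z)"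
  unfolding qexp_def GG_def term_GG ..



theorem corollary4p5p6:
  fixes q :: int and \<xi> :: rat
  assumes "q > 1" and "\<xi> \<noteq> 0"
  shows "(qexp (real_of_int q) (real_of_rat \<xi>) \<notin> \<rat> \<or> qexp (real_of_int q) (real_of_rat \<xi>) = 0)
         \<and> (\<bar>\<xi>\<bar> < 1 \<longrightarrow> qexp (inverse (real_of_int q)) (real_of_rat \<xi>) \<notin> \<rat>)"
proof
  have q2: "q \<ge> 2" using assms(1) by simp
  have qr: "real_of_int q > 1" using assms(1) by simp
  have xi0: "real_of_rat \<xi> \<noteq> 0" using assms(2) by simp
  have xir: "real_of_rat \<xi> \<in> \<rat>" by simp
  define x where "x = (real_of_int q - 1) * real_of_rat \<xi>"
  have xr: "x \<in> \<rat>" unfolding x_def using xir by (intro Rats_mult Rats_diff) auto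
  have x0: "x \<noteq> 0" unfolding x_def using qr xi0 by simp
  show "qexp (real_of_int q) (real_of_rat \<xi>) \<notin> \<rat> \<or> qexp (real_of_int q) (real_of_rat \<xi>) = 0"
    unfolding qexp_FF x_def[symmetric] using FF_rat_zero[OF q2 xr x0] by blast
  show "\<bar>\<xi>\<bar> < 1 \<longrightarrow> qexp (inverse (real_of_int q)) (real_of_rat \<xi>) \<notin> \<rat>"
  proof
    assume xi1: "\<bar>\<xi>\<bar> < 1"
    have xi1r: "\<bar>real_of_rat \<xi>\<bar> < 1"
      by (metis xi1 abs_of_rat of_rat_less_1_iff)
    define y where "y = (1 - 1 / real_of_int q) * real_of_rat \<xi>"
    have c: "0 < 1 - 1 / real_of_int q" "1 - 1 / real_of_int q \<le> 1" using qr by auto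
    have "\<bar>y\<bar> = (1 - 1 / real_of_int q) * \<bar>real_of_rat \<xi>\<bar>" unfolding y_def using c by (simp add: abs_mult)
    also have "\<dots> \<le> 1 * \<bar>real_of_rat \<xi>\<bar>" using c by (intro mult_right_mono) auto
    finally have "\<bar>y\<bar> \<le> \<bar>real_of_rat \<xi>\<bar>" by simp
    with xi1r have y1: "\<bar>y\<bar> < 1" by linarith
    have y0: "y \<noteq> 0" unfolding y_def using c xi0 assms(1) by simp
    have yr0: "y \<in> \<rat>" unfolding y_def using xir by (intro Rats_mult Rats_diff Rats_divide) auto
    hence yr: "-y \<in> \<rat>" by (simp add: Rats_minus_iff)
    have my0: "-y \<noteq> 0" using y0 by simp
    have K: "GG (1/real_of_int q) y * (1 - y) * FF (real_of_int q) (-y) = 1"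
      by (rule KK_one[OF qr y1 y0])
    show "qexp (inverse (real_of_int q)) (real_of_rat \<xi>) \<notin> \<rat>"
    proof
      assume "qexp (inverse (real_of_int q)) (real_of_rat \<xi>) \<in> \<rat>"
      hence Gr: "GG (1/real_of_int q) y \<in> \<rat>" unfolding qexp_GG y_def .
      have "FF (real_of_int q) (-y) = 1 / (GG (1/real_of_int q) y * (1 - y))"
      proof (rule eq_divide_imp)
        show "GG (1/real_of_int q) y * (1 - y) \<noteq> 0" using K by auto
        show "FF (real_of_int q) (-y) * (GG (1/real_of_int q) y * (1 - y)) = 1" using K by (metis mult.commute)
      qed
      also have "\<dots> \<in> \<rat>" using Gr yr0 by (intro Rats_divide Rats_mult Rats_diff) (auto simp: Rats_minus_iff)
      finally have "FF (real_of_int q) (-y) \<in> \<rat>" .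
      from FF_rat_zero[OF q2 yr my0 this] K show False by simp
    qed
  qed
qed

end
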